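(* Let $\Gamma=A\ast B$ with $A,B$ non-trivial, let $f=f_A\ast f_B$ be a split quasimorphism, and let $\sigma$ be an inner automorphism of $\Gamma$. Then $f$ is at bounded distance from $f^\sigma$; in particular $\omega_f=\omega_{f^\sigma}$ and $S=S^\sigma$. Consequently, for $\tau\in\mathrm{Aut}(\Gamma)$ the space $S^\tau$ only depends on the outer class of $\tau$.
   Context: Quasimorphisms $f_A:A\to\mathbb{R}$, $f_B:B\to\mathbb{R}$ are alternating ($f(x^{-1})=-f(x)$). For a free product $P\ast Q$, each non-trivial element has a unique normal form $p_1q_1\cdots p_nq_n$ ($p_i\in P$, $q_i\in Q$, all non-trivial except possibly $p_1$ or $q_n$), and the split quasimorphism is $(f_P\ast f_Q)(1)=0$, $(f_P\ast f_Q)(p_1q_1\cdots p_nq_n)=f_P(p_1)+f_Q(q_1)+\dots+f_P(p_n)+f_Q(q_n)$. For $\tau\in\mathrm{Aut}(\Gamma)$, $\Gamma=\tau(A)\ast\tau(B)$ is again a splitting, and $f^\tau:=f_{\tau(A)}\ast f_{\tau(B)}$ (split with respect to this splitting) where $f_{\tau(A)}=f_A\circ\tau^{-1}|_{\tau(A)}$, $f_{\tau(B)}=f_B\circ\tau^{-1}|_{\tau(B)}$. $\omega_f\in\mathrm{H}^2_\mathrm{b}(\Gamma,\mathbb{R})$ is the bounded class of $\partial f(g,h)=f(g)+f(h)-f(gh)$. $S\subset\mathrm{H}^2_\mathrm{b}(\Gamma,\mathbb{R})$ is the space of split classes of the splitting $A\ast B$, i.e. the set of classes $\omega_{f_A\ast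 f_B}$ with $f_A,f_B$ bounded alternating functions on $A,B$; $S^\tau$ is the corresponding space for the splitting $\tau(A)\ast\tau(B)$. *)

theory Defs
  imports "HOL-Algebra.Algebra"
begin

definition word_prod :: "('a, 'b) monoid_scheme \<Rightarrow> 'a list \<Rightarrow> 'a" where
  "word_prod G ws = foldr (\<lambda>x y. x \<otimes>\<^bsub>G\<^esub> y) ws \<one>\<^bsub>G\<^esub>"

definition reduced_word :: "('a, 'b) monoid_scheme \<Rightarrow> 'a set \<Rightarrow> 'a set \<Rightarrow> 'a list \<Rightarrow> bool" where
  "reduced_word G P Q ws \<longleftrightarrow>
     set ws \<subseteq> (P - {\<one>\<^bsub>G\<^esub>}) \<union> (Q - {\<one>\<^bsub>G\<^esub>}) \<and>
     successively (\<lambda>x y. (x \<in> P \<and> y \<in> Q) \<or> (x \<in> Q \<and> y \<in> P)) ws"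

definition is_free_product :: "('a, 'b) monoid_scheme \<Rightarrow> 'a set \<Rightarrow> 'a set \<Rightarrow> bool" where
  "is_free_product G P Q \<longleftrightarrow>
     subgroup P G \<and> subgroup Q G \<and> P \<inter> Q = {\<one>\<^bsub>G\<^esub>} \<and>
     (\<forall>g \<in> carrier G. \<exists>!ws. reduced_word G P Q ws \<and> word_prod G ws = g)"

text \<open>Split function f_P * f_Q with respect to the splitting P * Q
  (sum of the values on the letters of the normal form; 0 on the identity).\<close>
definition split_qm :: "('a, 'b) monoid_scheme \<Rightarrow> 'a set \<Rightarrow> 'a set \<Rightarrow>
    ('a \<Rightarrow> real) \<Rightarrow> ('a \<Rightarrow> real) \<Rightarrow> 'a \<Rightarrow> real" where
  "split_qm G P Q fP fQ g =
     (THE r. \<exists>ws. reduced_word G P Q ws \<and> word_prod G ws = g \<and>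
        r = sum_list (map (\<lambda>x. if x \<in> P then fP x else fQ x) ws))"

definition quasimorphism_on :: "('a, 'b) monoid_scheme \<Rightarrow> 'a set \<Rightarrow> ('a \<Rightarrow> real) \<Rightarrow> bool" where
  "quasimorphism_on G H f \<longleftrightarrow>
     (\<exists>D. \<forall>x \<in> H. \<forall>y \<in> H. \<bar>f x + f y - f (x \<otimes>\<^bsub>G\<^esub> y)\<bar> \<le> D)"

definition alternating_on :: "('a, 'b) monoid_scheme \<Rightarrow> 'a set \<Rightarrow> ('a \<Rightarrow> real) \<Rightarrow> bool" where
  "alternating_on G H f \<longleftrightarrow> (\<forall>x \<in> H. f (inv\<^bsub>G\<^esub> x) = - f x)"

definition bounded_on :: "'a set \<Rightarrow> ('a \<Rightarrow> real) \<Rightarrow> bool" where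
  "bounded_on H f \<longleftrightarrow> (\<exists>C. \<forall>x \<in> H. \<bar>f x\<bar> \<le> C)"

definition delta1 :: "('a, 'b) monoid_scheme \<Rightarrow> ('a \<Rightarrow> real) \<Rightarrow> 'a \<times> 'a \<Rightarrow> real" where
  "delta1 G f = (\<lambda>(g, h). f g + f h - f (g \<otimes>\<^bsub>G\<^esub> h))"

text \<open>The class in H^2_b(G,R) of a (bounded) 2-cocycle c: all 2-cochains differing
  from c (on G x G) by the coboundary of a bounded 1-cochain.\<close>
definition hb2_class :: "('a, 'b) monoid_scheme \<Rightarrow> ('a \<times> 'a \<Rightarrow> real) \<Rightarrow> ('a \<times> 'a \<Rightarrow> real) set" where
  "hb2_class G c = {c'. \<exists>b. bounded_on (carrier G) b \<and>
      (\<forall>g \<in> carrier G. \<forall>h \<in> carrier G. c (g, h) - c' (g, h) = delta1 G b (g, h))}"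

definition omega :: "('a, 'b) monoid_scheme \<Rightarrow> ('a \<Rightarrow> real) \<Rightarrow> ('a \<times> 'a \<Rightarrow> real) set" where
  "omega G f = hb2_class G (delta1 G f)"

definition split_classes :: "('a, 'b) monoid_scheme \<Rightarrow> 'a set \<Rightarrow> 'a set \<Rightarrow> ('a \<times> 'a \<Rightarrow> real) set set" where
  "split_classes G P Q = {omega G (split_qm G P Q fP fQ) | fP fQ.
      bounded_on P fP \<and> alternating_on G P fP \<and> bounded_on Q fQ \<and> alternating_on G Q fQ}"

text \<open>f^tau = f_{tau(A)} * f_{tau(B)}, with f_{tau(A)} = f_A o tau^{-1}.\<close>
definition twisted_split :: "('a, 'b) monoid_scheme \<Rightarrow> ('a \<Rightarrow> 'a) \<Rightarrow> 'a set \<Rightarrow> 'a set \<Rightarrow>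
    ('a \<Rightarrow> real) \<Rightarrow> ('a \<Rightarrow> real) \<Rightarrow> 'a \<Rightarrow> real" where
  "twisted_split G \<tau> A B fA fB =
     split_qm G (\<tau> ` A) (\<tau> ` B) (fA \<circ> inv_into (carrier G) \<tau>) (fB \<circ> inv_into (carrier G) \<tau>)"

definition inner_aut :: "('a, 'b) monoid_scheme \<Rightarrow> ('a \<Rightarrow> 'a) \<Rightarrow> bool" where
  "inner_aut G \<sigma> \<longleftrightarrow> (\<exists>x \<in> carrier G. \<forall>g \<in> carrier G. \<sigma> g = x \<otimes>\<^bsub>G\<^esub> g \<otimes>\<^bsub>G\<^esub> inv\<^bsub>G\<^esub> x)"

definition same_outer_class :: "('a, 'b) monoid_scheme \<Rightarrow> ('a \<Rightarrow> 'a) \<Rightarrow> ('a \<Rightarrow> 'a) \<Rightarrow> bool" where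
  "same_outer_class G \<tau>1 \<tau>2 \<longleftrightarrow>
     (\<exists>\<sigma>. inner_aut G \<sigma> \<and> (\<forall>g \<in> carrier G. \<tau>2 g = \<tau>1 (\<sigma> g)))"

end

theory Submission
  imports Defs
begin


context group begin

lemma wp_Nil[simp]: "word_prod G [] = \<one>" by (simp add: word_prod_def)
lemma wp_Cons[simp]: "word_prod G (a#ws) = a \<otimes> word_prod G ws" by (simp add: word_prod_def)

lemma wp_closed: "set ws \<subseteq> carrier G \<Longrightarrow> word_prod G ws \<in> carrier G"
  by (induction ws) auto

lemma wp_append: "set xs \<subseteq> carrier G \<Longrightarrow> set ys \<subseteq> carrier G \<Longrightarrow>
   word_prod G (xs @ ys) = word_prod G xs \<otimes> word_prod G ys"
  by (induction xs) (auto simp: wp_closed m_assoc)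

lemma wp_rev_inv: "set ws \<subseteq> carrier G \<Longrightarrow>
   word_prod G (rev (map (\<lambda>x. inv x) ws)) = inv (word_prod G ws)"
proof (induction ws)
  case Nil then show ?case by simp
next
  case (Cons a ws)
  have s: "set (rev (map (\<lambda>x. inv x) ws)) \<subseteq> carrier G" using Cons.prems by auto
  have "word_prod G (rev (map (\<lambda>x. inv x) (a#ws))) = word_prod G (rev (map (\<lambda>x. inv x) ws)) \<otimes> word_prod G [inv a]"
    using wp_append[OF s, of "[inv a]"] Cons.prems by auto
  then show ?case using Cons by (simp add: wp_closed inv_mult_group)
qed

lemma fp_sub: "is_free_product G P Q \<Longrightarrow> P \<subseteq> carrier G \<and> Q \<subseteq> carrier G"
  unfolding is_free_product_def by (auto dest: subgroup.subset)

lemma red_carrier: "is_free_product G P Q \<Longrightarrow> reduced_word G P Q ws \<Longrightarrow> set ws \<subseteq> carrier G"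
  using fp_sub unfolding reduced_word_def by blast

definition wval :: "'a set \<Rightarrow> ('a \<Rightarrow> real) \<Rightarrow> ('a \<Rightarrow> real) \<Rightarrow> 'a list \<Rightarrow> real" where
  "wval P fP fQ ws = sum_list (map (\<lambda>x. if x \<in> P then fP x else fQ x) ws)"

lemma split_qm_word:
  assumes fp: "is_free_product G P Q" and r: "reduced_word G P Q ws"
  shows "split_qm G P Q fP fQ (word_prod G ws) = wval P fP fQ ws"
proof -
  have c: "word_prod G ws \<in> carrier G" using wp_closed red_carrier[OF fp r] .
  then have u: "\<And>ws'. reduced_word G P Q ws' \<Longrightarrow> word_prod G ws' = word_prod G ws \<Longrightarrow> ws' = ws"
    using fp r unfolding is_free_product_def by metis
  show ?thesis unfolding split_qm_def
    apply (rule the_equality)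
    using r apply (auto simp: wval_def)[1]
    using u by (auto simp: wval_def)
qed

lemma nf_exists:
  assumes "is_free_product G P Q" "g \<in> carrier G"
  shows "\<exists>ws. reduced_word G P Q ws \<and> word_prod G ws = g"
  using assms unfolding is_free_product_def by blast

lemma red_Cons: "reduced_word G P Q (a#ws) \<longleftrightarrow> a \<in> (P - {\<one>}) \<union> (Q - {\<one>}) \<and> reduced_word G P Q ws \<and>
   (ws = [] \<or> (a \<in> P \<and> hd ws \<in> Q) \<or> (a \<in> Q \<and> hd ws \<in> P))"
  unfolding reduced_word_def by (auto simp: successively_Cons)

lemma red_Nil[simp]: "reduced_word G P Q []" by (simp add: reduced_word_def)

lemma wval_Cons[simp]: "wval P fP fQ (a#ws) = (if a \<in> P then fP a else fQ a) + wval P fP fQ ws"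
  by (simp add: wval_def)


end

context group begin
lemma red_swap: "reduced_word G P Q ws = reduced_word G Q P ws"
proof -
  have "(\<lambda>x y. (x \<in> P \<and> y \<in> Q) \<or> (x \<in> Q \<and> y \<in> P)) = (\<lambda>x y. (x \<in> Q \<and> y \<in> P) \<or> (x \<in> P \<and> y \<in> Q))"
    by auto
  note h = this
  show ?thesis unfolding reduced_word_def h by blast
qed

lemma fp_swap: "is_free_product G P Q \<Longrightarrow> is_free_product G Q P"
  unfolding is_free_product_def red_swap[of P Q] by (simp add: Int_commute conj_commute)

lemma wval_swap:
  assumes "is_free_product G P Q" "reduced_word G P Q ws"
  shows "wval P fP fQ ws = wval Q fQ fP ws"
proof -
  have "P \<inter> Q = {\<one>}" using assms(1) unfolding is_free_product_def by blast
  moreover have "set ws \<subseteq> (P - {\<one>}) \<union> (Q - {\<one>})" using assms(2) unfolding reduced_word_def by blast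
  ultimately have "\<And>x. x \<in> set ws \<Longrightarrow> (if x \<in> P then fP x else fQ x) = (if x \<in> Q then fQ x else fP x)"
    by auto
  then show ?thesis unfolding wval_def by (intro arg_cong[where f=sum_list] map_cong) auto
qed

lemma split_swap:
  assumes "is_free_product G P Q" "g \<in> carrier G"
  shows "split_qm G P Q fP fQ g = split_qm G Q P fQ fP g"
proof -
  obtain ws where "reduced_word G P Q ws" "word_prod G ws = g" using nf_exists assms by blast
  note ws = this
  have "split_qm G P Q fP fQ g = wval P fP fQ ws" using split_qm_word[OF assms(1) ws(1)] ws(2) by simp
  also have "\<dots> = wval Q fQ fP ws" using wval_swap[OF assms(1) ws(1)] .
  also have "\<dots> = split_qm G Q P fQ fP g"
    using split_qm_word[OF fp_swap[OF assms(1)], of ws] ws red_swap[of P Q ws] by simp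
  finally show ?thesis .
qed

end

context group begin
lemma left_letter_P:
  assumes fp: "is_free_product G P Q" and qm: "quasimorphism_on G P fP" and aP: "a \<in> P"
  shows "\<exists>C. \<forall>g \<in> carrier G. \<bar>split_qm G P Q fP fQ (a \<otimes> g) - split_qm G P Q fP fQ g\<bar> \<le> C"
proof -
  obtain D where D: "\<And>x y. x \<in> P \<Longrightarrow> y \<in> P \<Longrightarrow> \<bar>fP x + fP y - fP (x \<otimes> y)\<bar> \<le> D"
    using qm unfolding quasimorphism_on_def by blast
  have PQ: "P \<subseteq> carrier G" "Q \<subseteq> carrier G" using fp_sub[OF fp] by auto
  have sP: "subgroup P G" and PiQ: "P \<inter> Q = {\<one>}" using fp unfolding is_free_product_def by auto
  have D0: "0 \<le> D" using D[of \<one> \<one>] subgroup.one_closed[OF sP] by auto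
  have ac: "a \<in> carrier G" using aP PQ by auto
  define F where "F = split_qm G P Q fP fQ"
  have "\<bar>F (a \<otimes> g) - F g\<bar> \<le> \<bar>fP a\<bar> + \<bar>fP (inv a)\<bar> + D" if g: "g \<in> carrier G" for g
  proof (cases "a = \<one>")
    case True then show ?thesis using g D0 by simp
  next
    case an: False
    obtain ws where ws: "reduced_word G P Q ws" "word_prod G ws = g" using nf_exists fp g by blast
    have wsc: "set ws \<subseteq> carrier G" using red_carrier[OF fp ws(1)] .
    show ?thesis
    proof (cases ws)
      case Nil
      have r: "reduced_word G P Q [a]" using aP an by (simp add: red_Cons)
      have g1: "g = \<one>" using ws Nil by simp
      have "F (a \<otimes> g) = fP a" using split_qm_word[OF fp r] g1 ac aP by (simp add: F_def wval_def)
      moreover have "F g = 0" using split_qm_word[OF fp ws(1)] ws Nil by (simp add: F_def wval_def)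
      ultimately show ?thesis using D0 by simp
    next
      case (Cons w rest)
      have wc: "w \<in> carrier G" and restc: "set rest \<subseteq> carrier G" using wsc Cons by auto
      have wr: "w \<in> (P - {\<one>}) \<union> (Q - {\<one>})" "reduced_word G P Q rest"
        "rest = [] \<or> (w \<in> P \<and> hd rest \<in> Q) \<or> (w \<in> Q \<and> hd rest \<in> P)"
        using ws(1) Cons by (auto simp: red_Cons)
      have Fg: "F g = (if w \<in> P then fP w else fQ w) + wval P fP fQ rest"
        using split_qm_word[OF fp ws(1)] ws Cons by (simp add: F_def)
      show ?thesis
      proof (cases "w \<in> P")
        case False
        then have wQ: "w \<in> Q" using wr by auto
        have r: "reduced_word G P Q (a#ws)" using aP an ws(1) Cons wQ by (simp add: red_Cons)
        have "F (a \<otimes> g) = fP a + F g" using split_qm_word[OF fp r] ws aP Fg False Cons by (simp add: F_def)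
        then show ?thesis using D0 by simp
      next
        case wP: True
        then have wnQ: "w \<notin> Q" using wr PiQ by auto
        have ag: "a \<otimes> g = (a \<otimes> w) \<otimes> word_prod G rest"
          using ws Cons by (simp add: m_assoc ac wc wp_closed restc)
        have awP: "a \<otimes> w \<in> P" using aP wP subgroup.m_closed[OF sP] by blast
        show ?thesis
        proof (cases "a \<otimes> w = \<one>")
          case True
          then have "inv w = a" using inv_equality ac wc by blast
          then have wa: "w = inv a" using wc by (metis inv_inv)
          have "F (a \<otimes> g) = wval P fP fQ rest" using split_qm_word[OF fp wr(2)] ag True restc
            by (simp add: F_def wp_closed)
          then have "F (a \<otimes> g) - F g = - fP (inv a)" using Fg wP wa by simp
          then show ?thesis using D0 by simp
        next
          case False
          have r: "reduced_word G P Q ((a \<otimes> w) # rest)" using False awP wr wnQ by (auto simp: red_Cons)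
          have "F (a \<otimes> g) = fP (a \<otimes> w) + wval P fP fQ rest" using split_qm_word[OF fp r] ag awP
            by (simp add: F_def)
          then have "F (a \<otimes> g) - F g = fP (a \<otimes> w) - fP w" using Fg wP by simp
          moreover have "\<bar>fP a + fP w - fP (a \<otimes> w)\<bar> \<le> D" using D aP wP by blast
          ultimately show ?thesis by linarith
        qed
      qed
    qed
  qed
  then show ?thesis unfolding F_def by blast
qed

end

context group begin

lemma left_letter:
  assumes fp: "is_free_product G P Q" and qP: "quasimorphism_on G P fP" and qQ: "quasimorphism_on G Q fQ"
    and a: "a \<in> P \<union> Q"
  shows "\<exists>C. \<forall>g \<in> carrier G. \<bar>split_qm G P Q fP fQ (a \<otimes> g) - split_qm G P Q fP fQ g\<bar> \<le> C"
proof (cases "a \<in> P")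
  case True then show ?thesis using left_letter_P[OF fp qP] by blast
next
  case False
  then have aQ: "a \<in> Q" using a by blast
  have ac: "a \<in> carrier G" using aQ fp_sub[OF fp] by blast
  obtain C where C: "\<forall>g \<in> carrier G. \<bar>split_qm G Q P fQ fP (a \<otimes> g) - split_qm G Q P fQ fP g\<bar> \<le> C"
    using left_letter_P[OF fp_swap[OF fp] qQ aQ] by blast
  have "\<forall>g \<in> carrier G. \<bar>split_qm G P Q fP fQ (a \<otimes> g) - split_qm G P Q fP fQ g\<bar> \<le> C"
  proof
    fix g assume g: "g \<in> carrier G"
    then show "\<bar>split_qm G P Q fP fQ (a \<otimes> g) - split_qm G P Q fP fQ g\<bar> \<le> C"
      using C split_swap[OF fp g] split_swap[OF fp, of "a \<otimes> g"] ac by simp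
  qed
  then show ?thesis by blast
qed

lemma left_word:
  assumes fp: "is_free_product G P Q" and qP: "quasimorphism_on G P fP" and qQ: "quasimorphism_on G Q fQ"
  shows "set ws \<subseteq> P \<union> Q \<Longrightarrow>
    \<exists>C. \<forall>g \<in> carrier G. \<bar>split_qm G P Q fP fQ (word_prod G ws \<otimes> g) - split_qm G P Q fP fQ g\<bar> \<le> C"
proof (induction ws)
  case Nil then show ?case by (intro exI[of _ 0]) simp
next
  case (Cons a ws)
  have sub: "P \<union> Q \<subseteq> carrier G" using fp_sub[OF fp] by blast
  obtain C1 where C1: "\<forall>g \<in> carrier G. \<bar>split_qm G P Q fP fQ (word_prod G ws \<otimes> g) - split_qm G P Q fP fQ g\<bar> \<le> C1"
    using Cons by auto
  obtain C2 where C2: "\<forall>g \<in> carrier G. \<bar>split_qm G P Q fP fQ (a \<otimes> g) - split_qm G P Q fP fQ g\<bar> \<le> C2"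
    using left_letter[OF fp qP qQ, of a] Cons.prems by auto
  have ac: "a \<in> carrier G" and wc: "word_prod G ws \<in> carrier G"
    using Cons.prems sub wp_closed[of ws] by auto
  have "\<bar>split_qm G P Q fP fQ (word_prod G (a#ws) \<otimes> g) - split_qm G P Q fP fQ g\<bar> \<le> C2 + C1"
    if g: "g \<in> carrier G" for g
  proof -
    have e: "word_prod G (a#ws) \<otimes> g = a \<otimes> (word_prod G ws \<otimes> g)" using ac wc g by (simp add: m_assoc)
    have "word_prod G ws \<otimes> g \<in> carrier G" using wc g by simp
    then have "\<bar>split_qm G P Q fP fQ (a \<otimes> (word_prod G ws \<otimes> g)) - split_qm G P Q fP fQ (word_prod G ws \<otimes> g)\<bar> \<le> C2"
      using C2 by blast
    moreover have "\<bar>split_qm G P Q fP fQ (word_prod G ws \<otimes> g) - split_qm G P Q fP fQ g\<bar> \<le> C1" using C1 g by blast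
    ultimately show ?thesis unfolding e by linarith
  qed
  then show ?case by blast
qed

lemma left_elem:
  assumes fp: "is_free_product G P Q" and qP: "quasimorphism_on G P fP" and qQ: "quasimorphism_on G Q fQ"
    and y: "y \<in> carrier G"
  shows "\<exists>C. \<forall>g \<in> carrier G. \<bar>split_qm G P Q fP fQ (y \<otimes> g) - split_qm G P Q fP fQ g\<bar> \<le> C"
proof -
  obtain ws where ws: "reduced_word G P Q ws" "word_prod G ws = y" using nf_exists[OF fp y] by blast
  have "set ws \<subseteq> P \<union> Q" using ws(1) unfolding reduced_word_def by blast
  then show ?thesis using left_word[OF fp qP qQ] ws(2) by blast
qed

end

context group begin
lemma wval_append: "wval P fP fQ (xs @ ys) = wval P fP fQ xs + wval P fP fQ ys"
  by (simp add: wval_def)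

lemma red_inv:
  assumes fp: "is_free_product G P Q" and r: "reduced_word G P Q ws"
  shows "reduced_word G P Q (rev (map (\<lambda>x. inv x) ws))"
proof -
  have sP: "subgroup P G" and sQ: "subgroup Q G" using fp unfolding is_free_product_def by auto
  have PQ: "P \<subseteq> carrier G" "Q \<subseteq> carrier G" using fp_sub[OF fp] by auto
  have memP: "x \<in> carrier G \<Longrightarrow> inv x \<in> P \<longleftrightarrow> x \<in> P" for x
    using subgroup.m_inv_closed[OF sP, of x] subgroup.m_inv_closed[OF sP, of "inv x"] inv_inv[of x] by auto
  have memQ: "x \<in> carrier G \<Longrightarrow> inv x \<in> Q \<longleftrightarrow> x \<in> Q" for x
    using subgroup.m_inv_closed[OF sQ, of x] subgroup.m_inv_closed[OF sQ, of "inv x"] inv_inv[of x] by auto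
  have s: "set ws \<subseteq> (P - {\<one>}) \<union> (Q - {\<one>})" and sc: "successively (\<lambda>x y. (x \<in> P \<and> y \<in> Q) \<or> (x \<in> Q \<and> y \<in> P)) ws"
    using r unfolding reduced_word_def by auto
  have c: "set ws \<subseteq> carrier G" using s PQ by blast
  have s': "set (rev (map (\<lambda>x. inv x) ws)) \<subseteq> (P - {\<one>}) \<union> (Q - {\<one>})"
  proof
    fix z assume "z \<in> set (rev (map (\<lambda>x. inv x) ws))"
    then have "z \<in> (\<lambda>x. inv x) ` set ws" by simp
    then obtain x where x: "x \<in> set ws" "z = inv x" by (rule imageE)
    then have xc: "x \<in> carrier G" using c by blast
    have "x \<noteq> \<one>" using x s by blast
    then have "inv x \<noteq> \<one>" using xc by simp
    moreover have "x \<in> P \<or> x \<in> Q" using x s by blast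
    ultimately show "z \<in> (P - {\<one>}) \<union> (Q - {\<one>})" using x(2) memP[OF xc] memQ[OF xc] by auto
  qed
  have "successively (\<lambda>x y. (inv y \<in> P \<and> inv x \<in> Q) \<or> (inv y \<in> Q \<and> inv x \<in> P)) ws"
  proof (rule successively_mono[OF sc])
    fix x y assume xy: "x \<in> set ws" "y \<in> set ws" "(x \<in> P \<and> y \<in> Q) \<or> (x \<in> Q \<and> y \<in> P)"
    have "x \<in> carrier G" "y \<in> carrier G" using xy c by auto
    then show "(inv y \<in> P \<and> inv x \<in> Q) \<or> (inv y \<in> Q \<and> inv x \<in> P)"
      using xy(3) memP memQ by auto
  qed
  then have sc': "successively (\<lambda>x y. (x \<in> P \<and> y \<in> Q) \<or> (x \<in> Q \<and> y \<in> P)) (rev (map (\<lambda>x. inv x) ws))"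
    by (simp add: successively_map)
  show ?thesis unfolding reduced_word_def using s' sc' by (rule conjI)
qed

end

context group begin
lemma wval_inv:
  assumes fp: "is_free_product G P Q" and aP: "alternating_on G P fP" and aQ: "alternating_on G Q fQ"
  shows "set ws \<subseteq> P \<union> Q \<Longrightarrow> wval P fP fQ (rev (map (\<lambda>x. inv x) ws)) = - wval P fP fQ ws"
proof (induction ws)
  case Nil then show ?case by (simp add: wval_def)
next
  case (Cons a ws)
  have sP: "subgroup P G" using fp unfolding is_free_product_def by auto
  have PQ: "P \<subseteq> carrier G" "Q \<subseteq> carrier G" using fp_sub[OF fp] by auto
  have ac: "a \<in> carrier G" using Cons.prems PQ by auto
  have memP: "inv a \<in> P \<longleftrightarrow> a \<in> P"
    using ac subgroup.m_inv_closed[OF sP, of a] subgroup.m_inv_closed[OF sP, of "inv a"] inv_inv[of a] by auto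
  have "(if inv a \<in> P then fP (inv a) else fQ (inv a)) = - (if a \<in> P then fP a else fQ a)"
    using memP aP aQ Cons.prems unfolding alternating_on_def by auto
  then show ?case using Cons by (simp add: wval_append wval_def)
qed

lemma split_inv:
  assumes fp: "is_free_product G P Q" and aP: "alternating_on G P fP" and aQ: "alternating_on G Q fQ"
    and g: "g \<in> carrier G"
  shows "split_qm G P Q fP fQ (inv g) = - split_qm G P Q fP fQ g"
proof -
  obtain ws where ws: "reduced_word G P Q ws" "word_prod G ws = g" using nf_exists[OF fp g] by blast
  have c: "set ws \<subseteq> carrier G" using red_carrier[OF fp ws(1)] .
  have s: "set ws \<subseteq> P \<union> Q" using ws(1) unfolding reduced_word_def by blast
  have "inv g = word_prod G (rev (map (\<lambda>x. inv x) ws))" using wp_rev_inv[OF c] ws(2) by simp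
  then have "split_qm G P Q fP fQ (inv g) = wval P fP fQ (rev (map (\<lambda>x. inv x) ws))"
    using split_qm_word[OF fp red_inv[OF fp ws(1)]] by simp
  also have "\<dots> = - wval P fP fQ ws" using wval_inv[OF fp aP aQ s] .
  also have "\<dots> = - split_qm G P Q fP fQ g" using split_qm_word[OF fp ws(1)] ws(2) by simp
  finally show ?thesis .
qed

lemma right_elem:
  assumes fp: "is_free_product G P Q" and qP: "quasimorphism_on G P fP" and qQ: "quasimorphism_on G Q fQ"
    and aP: "alternating_on G P fP" and aQ: "alternating_on G Q fQ"
    and y: "y \<in> carrier G"
  shows "\<exists>C. \<forall>g \<in> carrier G. \<bar>split_qm G P Q fP fQ (g \<otimes> y) - split_qm G P Q fP fQ g\<bar> \<le> C"
proof -
  obtain C where C: "\<forall>g \<in> carrier G. \<bar>split_qm G P Q fP fQ (inv y \<otimes> g) - split_qm G P Q fP fQ g\<bar> \<le> C"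
    using left_elem[OF fp qP qQ] y by blast
  have "\<bar>split_qm G P Q fP fQ (g \<otimes> y) - split_qm G P Q fP fQ g\<bar> \<le> C" if g: "g \<in> carrier G" for g
  proof -
    have "\<bar>split_qm G P Q fP fQ (inv y \<otimes> inv g) - split_qm G P Q fP fQ (inv g)\<bar> \<le> C" using C g by simp
    moreover have "inv y \<otimes> inv g = inv (g \<otimes> y)" using g y by (simp add: inv_mult_group)
    moreover have "split_qm G P Q fP fQ (inv (g \<otimes> y)) = - split_qm G P Q fP fQ (g \<otimes> y)"
      using split_inv[OF fp aP aQ] g y by simp
    moreover have "split_qm G P Q fP fQ (inv g) = - split_qm G P Q fP fQ g"
      using split_inv[OF fp aP aQ] g by simp
    ultimately show ?thesis by simp
  qed
  then show ?thesis by blast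
qed

lemma conj_bound:
  assumes fp: "is_free_product G P Q" and qP: "quasimorphism_on G P fP" and qQ: "quasimorphism_on G Q fQ"
    and aP: "alternating_on G P fP" and aQ: "alternating_on G Q fQ"
    and x: "x \<in> carrier G"
  shows "\<exists>C. \<forall>g \<in> carrier G. \<bar>split_qm G P Q fP fQ (inv x \<otimes> g \<otimes> x) - split_qm G P Q fP fQ g\<bar> \<le> C"
proof -
  obtain C1 where C1: "\<forall>g \<in> carrier G. \<bar>split_qm G P Q fP fQ (inv x \<otimes> g) - split_qm G P Q fP fQ g\<bar> \<le> C1"
    using left_elem[OF fp qP qQ] x by blast
  obtain C2 where C2: "\<forall>g \<in> carrier G. \<bar>split_qm G P Q fP fQ (g \<otimes> x) - split_qm G P Q fP fQ g\<bar> \<le> C2"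
    using right_elem[OF fp qP qQ aP aQ x] by blast
  have "\<bar>split_qm G P Q fP fQ (inv x \<otimes> g \<otimes> x) - split_qm G P Q fP fQ g\<bar> \<le> C2 + C1" if g: "g \<in> carrier G" for g
  proof -
    have "\<bar>split_qm G P Q fP fQ (inv x \<otimes> g \<otimes> x) - split_qm G P Q fP fQ (inv x \<otimes> g)\<bar> \<le> C2"
      using C2 g x by simp
    moreover have "\<bar>split_qm G P Q fP fQ (inv x \<otimes> g) - split_qm G P Q fP fQ g\<bar> \<le> C1" using C1 g by blast
    ultimately show ?thesis by linarith
  qed
  then show ?thesis by blast
qed

end

context group begin

lemma iso_hom_facts:
  assumes "\<sigma> \<in> iso G G"
  shows "group_hom G G \<sigma>" "inj_on \<sigma> (carrier G)" "\<sigma> ` carrier G = carrier G"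
  using assms unfolding iso_def bij_betw_def group_hom_def group_hom_axioms_def
  by (auto simp: is_group)

lemma wp_map:
  assumes "\<sigma> \<in> iso G G"
  shows "set ws \<subseteq> carrier G \<Longrightarrow> word_prod G (map \<sigma> ws) = \<sigma> (word_prod G ws)"
proof (induction ws)
  case Nil
  interpret h: group_hom G G \<sigma> using iso_hom_facts[OF assms] by blast
  show ?case by simp
next
  case (Cons a ws)
  interpret h: group_hom G G \<sigma> using iso_hom_facts[OF assms] by blast
  show ?case using Cons by (simp add: wp_closed)
qed

lemma red_map:
  assumes s: "\<sigma> \<in> iso G G" and PQ: "P \<subseteq> carrier G" "Q \<subseteq> carrier G"
    and r: "reduced_word G P Q ws"
  shows "reduced_word G (\<sigma> ` P) (\<sigma> ` Q) (map \<sigma> ws)"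
proof -
  interpret h: group_hom G G \<sigma> using iso_hom_facts[OF s] by blast
  have inj: "inj_on \<sigma> (carrier G)" using iso_hom_facts[OF s] by blast
  have sw: "set ws \<subseteq> (P - {\<one>}) \<union> (Q - {\<one>})" and sc: "successively (\<lambda>x y. (x \<in> P \<and> y \<in> Q) \<or> (x \<in> Q \<and> y \<in> P)) ws"
    using r unfolding reduced_word_def by auto
  have c: "set ws \<subseteq> carrier G" using sw PQ by blast
  have memP: "x \<in> carrier G \<Longrightarrow> \<sigma> x \<in> \<sigma> ` P \<longleftrightarrow> x \<in> P" for x
    using inj PQ(1) by (auto dest: inj_onD)
  have memQ: "x \<in> carrier G \<Longrightarrow> \<sigma> x \<in> \<sigma> ` Q \<longleftrightarrow> x \<in> Q" for x
    using inj PQ(2) by (auto dest: inj_onD)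
  have ne: "x \<in> carrier G \<Longrightarrow> \<sigma> x = \<one> \<longleftrightarrow> x = \<one>" for x
    using inj h.hom_one by (metis inj_onD one_closed)
  have s1: "set (map \<sigma> ws) \<subseteq> (\<sigma> ` P - {\<one>}) \<union> (\<sigma> ` Q - {\<one>})"
  proof
    fix z assume "z \<in> set (map \<sigma> ws)"
    then have "z \<in> \<sigma> ` set ws" by simp
    then obtain x where x: "x \<in> set ws" "z = \<sigma> x" by (rule imageE)
    then have xc: "x \<in> carrier G" using c by blast
    have "x \<noteq> \<one>" using x sw by blast
    then have "\<sigma> x \<noteq> \<one>" using ne[OF xc] by simp
    moreover have "x \<in> P \<or> x \<in> Q" using x sw by blast
    ultimately show "z \<in> (\<sigma> ` P - {\<one>}) \<union> (\<sigma> ` Q - {\<one>})" using x(2) memP[OF xc] memQ[OF xc] by auto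
  qed
  have "successively (\<lambda>x y. (\<sigma> x \<in> \<sigma> ` P \<and> \<sigma> y \<in> \<sigma> ` Q) \<or> (\<sigma> x \<in> \<sigma> ` Q \<and> \<sigma> y \<in> \<sigma> ` P)) ws"
  proof (rule successively_mono[OF sc])
    fix x y assume xy: "x \<in> set ws" "y \<in> set ws" "(x \<in> P \<and> y \<in> Q) \<or> (x \<in> Q \<and> y \<in> P)"
    have "x \<in> carrier G" "y \<in> carrier G" using xy c by auto
    then show "(\<sigma> x \<in> \<sigma> ` P \<and> \<sigma> y \<in> \<sigma> ` Q) \<or> (\<sigma> x \<in> \<sigma> ` Q \<and> \<sigma> y \<in> \<sigma> ` P)"
      using xy(3) memP memQ by auto
  qed
  then have s2: "successively (\<lambda>x y. (x \<in> \<sigma> ` P \<and> y \<in> \<sigma> ` Q) \<or> (x \<in> \<sigma> ` Q \<and> y \<in> \<sigma> ` P)) (map \<sigma> ws)"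
    by (simp add: successively_map)
  show ?thesis unfolding reduced_word_def using s1 s2 by (rule conjI)
qed

lemma fp_iso:
  assumes fp: "is_free_product G P Q" and s: "\<sigma> \<in> iso G G"
  shows "is_free_product G (\<sigma> ` P) (\<sigma> ` Q)"
proof -
  define psi where "psi = inv_into (carrier G) \<sigma>"
  have ps: "psi \<in> iso G G" unfolding psi_def using iso_set_sym[OF s] .
  interpret h: group_hom G G \<sigma> using iso_hom_facts[OF s] by blast
  have inj: "inj_on \<sigma> (carrier G)" and im: "\<sigma> ` carrier G = carrier G" using iso_hom_facts[OF s] by auto
  have PQ: "P \<subseteq> carrier G" "Q \<subseteq> carrier G" using fp_sub[OF fp] by auto
  have sP: "subgroup P G" and sQ: "subgroup Q G" and PiQ: "P \<inter> Q = {\<one>}"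
    using fp unfolding is_free_product_def by auto
  have sPQ': "\<sigma> ` P \<subseteq> carrier G" "\<sigma> ` Q \<subseteq> carrier G" using PQ im by auto
  have bk: "psi ` \<sigma> ` P = P" "psi ` \<sigma> ` Q = Q" unfolding psi_def using inj PQ by auto
  have sf: "\<And>y. y \<in> carrier G \<Longrightarrow> \<sigma> (psi y) = y" unfolding psi_def using im by (simp add: f_inv_into_f)
  have pc: "\<And>y. y \<in> carrier G \<Longrightarrow> psi y \<in> carrier G" unfolding psi_def using im by (metis inv_into_into)
  have sg1: "subgroup (\<sigma> ` P) G" using h.subgroup_img_is_subgroup[OF sP] .
  have sg2: "subgroup (\<sigma> ` Q) G" using h.subgroup_img_is_subgroup[OF sQ] .
  have int: "\<sigma> ` P \<inter> \<sigma> ` Q = {\<one>}"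
  proof -
    have "\<sigma> ` P \<inter> \<sigma> ` Q = \<sigma> ` (P \<inter> Q)" using inj PQ inj_on_image_Int by metis
    then show ?thesis using PiQ by simp
  qed
  have ex1: "\<exists>!ws. reduced_word G (\<sigma> ` P) (\<sigma> ` Q) ws \<and> word_prod G ws = g" if g: "g \<in> carrier G" for g
  proof -
    obtain ws where ws: "reduced_word G P Q ws" "word_prod G ws = psi g" using nf_exists[OF fp pc[OF g]] by blast
    have c: "set ws \<subseteq> carrier G" using red_carrier[OF fp ws(1)] .
    have r: "reduced_word G (\<sigma> ` P) (\<sigma> ` Q) (map \<sigma> ws)" using red_map[OF s PQ ws(1)] .
    have p: "word_prod G (map \<sigma> ws) = g" using wp_map[OF s c] ws(2) sf[OF g] by simp
    have u: "vs = map \<sigma> ws" if v: "reduced_word G (\<sigma> ` P) (\<sigma> ` Q) vs" "word_prod G vs = g" for vs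
    proof -
      have vc: "set vs \<subseteq> carrier G" using v(1) sPQ' unfolding reduced_word_def by blast
      have rv: "reduced_word G P Q (map psi vs)" using red_map[OF ps sPQ' v(1)] bk by simp
      have "word_prod G (map psi vs) = psi g" using wp_map[OF ps vc] v(2) by simp
      then have "map psi vs = ws" using fp ws rv pc[OF g] unfolding is_free_product_def by metis
      then have "map \<sigma> (map psi vs) = map \<sigma> ws" by simp
      moreover have "map \<sigma> (map psi vs) = vs" using vc sf by (induction vs) auto
      ultimately show ?thesis by simp
    qed
    show ?thesis using r p u by blast
  qed
  show ?thesis unfolding is_free_product_def using sg1 sg2 int ex1 by blast
qed

lemma split_iso:
  assumes fp: "is_free_product G P Q" and s: "\<sigma> \<in> iso G G" and g: "g \<in> carrier G"
  shows "split_qm G (\<sigma> ` P) (\<sigma> ` Q) (fP \<circ> inv_into (carrier G) \<sigma>) (fQ \<circ> inv_into (carrier G) \<sigma>) g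
       = split_qm G P Q fP fQ (inv_into (carrier G) \<sigma> g)"
proof -
  define psi where "psi = inv_into (carrier G) \<sigma>"
  have inj: "inj_on \<sigma> (carrier G)" and im: "\<sigma> ` carrier G = carrier G" using iso_hom_facts[OF s] by auto
  have PQ: "P \<subseteq> carrier G" "Q \<subseteq> carrier G" using fp_sub[OF fp] by auto
  have sf: "\<And>y. y \<in> carrier G \<Longrightarrow> \<sigma> (psi y) = y" unfolding psi_def using im by (simp add: f_inv_into_f)
  have fs: "\<And>y. y \<in> carrier G \<Longrightarrow> psi (\<sigma> y) = y" unfolding psi_def using inj by (simp add: inv_into_f_f)
  have pc: "psi g \<in> carrier G" unfolding psi_def using im g by (metis inv_into_into)
  obtain ws where ws: "reduced_word G P Q ws" "word_prod G ws = psi g" using nf_exists[OF fp pc] by blast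
  have c: "set ws \<subseteq> carrier G" using red_carrier[OF fp ws(1)] .
  have r: "reduced_word G (\<sigma> ` P) (\<sigma> ` Q) (map \<sigma> ws)" using red_map[OF s PQ ws(1)] .
  have p: "word_prod G (map \<sigma> ws) = g" using wp_map[OF s c] ws(2) sf[OF g] by simp
  have memP: "x \<in> carrier G \<Longrightarrow> \<sigma> x \<in> \<sigma> ` P \<longleftrightarrow> x \<in> P" for x
    using inj PQ(1) by (auto dest: inj_onD)
  have "wval (\<sigma> ` P) (fP \<circ> psi) (fQ \<circ> psi) (map \<sigma> ws) = wval P fP fQ ws"
    using c by (induction ws) (auto simp: memP fs wval_def)
  then show ?thesis
    using split_qm_word[OF fp_iso[OF fp s] r] split_qm_word[OF fp ws(1)] p ws(2) unfolding psi_def by simp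
qed

end

context group begin

lemma cancel1[simp]: "x \<in> carrier G \<Longrightarrow> z \<in> carrier G \<Longrightarrow> inv x \<otimes> (x \<otimes> z) = z"
  by (simp add: m_assoc[symmetric])
lemma cancel2[simp]: "x \<in> carrier G \<Longrightarrow> z \<in> carrier G \<Longrightarrow> x \<otimes> (inv x \<otimes> z) = z"
  by (simp add: m_assoc[symmetric])

lemma omega_sub:
  assumes b: "bounded_on (carrier G) b"
    and e: "\<forall>g \<in> carrier G. \<forall>h \<in> carrier G. delta1 G f (g, h) - delta1 G f' (g, h) = delta1 G b (g, h)"
  shows "omega G f \<subseteq> omega G f'"
proof
  fix c assume "c \<in> omega G f"
  then obtain b' where b': "bounded_on (carrier G) b'"
    "\<forall>g \<in> carrier G. \<forall>h \<in> carrier G. delta1 G f (g, h) - c (g, h) = delta1 G b' (g, h)"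
    unfolding omega_def hb2_class_def by blast
  obtain C where C: "\<forall>x \<in> carrier G. \<bar>b x\<bar> \<le> C" using b unfolding bounded_on_def by blast
  obtain C' where C': "\<forall>x \<in> carrier G. \<bar>b' x\<bar> \<le> C'" using b'(1) unfolding bounded_on_def by blast
  have "bounded_on (carrier G) (\<lambda>x. b' x - b x)"
    unfolding bounded_on_def
  proof (intro exI[of _ "C' + C"] ballI)
    fix x assume "x \<in> carrier G"
    then show "\<bar>b' x - b x\<bar> \<le> C' + C" using C C' by (smt (verit))
  qed
  moreover have "\<forall>g \<in> carrier G. \<forall>h \<in> carrier G. delta1 G f' (g, h) - c (g, h) = delta1 G (\<lambda>x. b' x - b x) (g, h)"
  proof (intro ballI)
    fix g h assume gh: "g \<in> carrier G" "h \<in> carrier G"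
    have 1: "delta1 G f (g, h) - delta1 G f' (g, h) = delta1 G b (g, h)" using e gh by blast
    have 2: "delta1 G f (g, h) - c (g, h) = delta1 G b' (g, h)" using b'(2) gh by blast
    show "delta1 G f' (g, h) - c (g, h) = delta1 G (\<lambda>x. b' x - b x) (g, h)"
      using 1 2 unfolding delta1_def by (simp only: prod.case)
  qed
  ultimately show "c \<in> omega G f'" unfolding omega_def hb2_class_def by blast
qed

lemma omega_bdd:
  assumes "\<exists>C. \<forall>g \<in> carrier G. \<bar>f g - f' g\<bar> \<le> C"
  shows "omega G f = omega G f'"
proof -
  obtain C where C: "\<forall>g \<in> carrier G. \<bar>f g - f' g\<bar> \<le> C" using assms by blast
  have b1: "bounded_on (carrier G) (\<lambda>x. f x - f' x)" using C unfolding bounded_on_def by blast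
  have b2: "bounded_on (carrier G) (\<lambda>x. f' x - f x)" using C unfolding bounded_on_def
    by (metis abs_minus_commute)
  show ?thesis
  proof
    show "omega G f \<subseteq> omega G f'" by (rule omega_sub[OF b1]) (auto simp: delta1_def)
    show "omega G f' \<subseteq> omega G f" by (rule omega_sub[OF b2]) (auto simp: delta1_def)
  qed
qed

lemma inner_inv:
  assumes s: "\<sigma> \<in> iso G G" and x: "x \<in> carrier G" and sx: "\<forall>g \<in> carrier G. \<sigma> g = x \<otimes> g \<otimes> inv x"
    and g: "g \<in> carrier G"
  shows "inv_into (carrier G) \<sigma> g = inv x \<otimes> g \<otimes> x"
proof -
  have inj: "inj_on \<sigma> (carrier G)" using iso_hom_facts[OF s] by auto
  have c: "inv x \<otimes> g \<otimes> x \<in> carrier G" using x g by simp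
  have "\<sigma> (inv x \<otimes> g \<otimes> x) = x \<otimes> (inv x \<otimes> g \<otimes> x) \<otimes> inv x" using sx c by blast
  also have "\<dots> = g" using x g by (simp add: m_assoc)
  finally show ?thesis using inv_into_f_eq[OF inj c] by blast
qed

lemma core:
  assumes fp: "is_free_product G P Q" and qP: "quasimorphism_on G P fP" and qQ: "quasimorphism_on G Q fQ"
    and aP: "alternating_on G P fP" and aQ: "alternating_on G Q fQ"
    and s: "\<sigma> \<in> iso G G" and inn: "inner_aut G \<sigma>"
  shows "\<exists>C. \<forall>g \<in> carrier G. \<bar>split_qm G P Q fP fQ g -
     split_qm G (\<sigma> ` P) (\<sigma> ` Q) (fP \<circ> inv_into (carrier G) \<sigma>) (fQ \<circ> inv_into (carrier G) \<sigma>) g\<bar> \<le> C"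
proof -
  obtain x where x: "x \<in> carrier G" "\<forall>g \<in> carrier G. \<sigma> g = x \<otimes> g \<otimes> inv x"
    using inn unfolding inner_aut_def by blast
  obtain C where C: "\<forall>g \<in> carrier G. \<bar>split_qm G P Q fP fQ (inv x \<otimes> g \<otimes> x) - split_qm G P Q fP fQ g\<bar> \<le> C"
    using conj_bound[OF fp qP qQ aP aQ x(1)] by blast
  have "\<bar>split_qm G P Q fP fQ g -
     split_qm G (\<sigma> ` P) (\<sigma> ` Q) (fP \<circ> inv_into (carrier G) \<sigma>) (fQ \<circ> inv_into (carrier G) \<sigma>) g\<bar> \<le> C"
    if g: "g \<in> carrier G" for g
    using split_iso[OF fp s g] inner_inv[OF s x g] C g by (simp add: abs_minus_commute)
  then show ?thesis by blast
qed

lemma bdd_qm: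
  assumes sP: "subgroup P G" and b: "bounded_on P f"
  shows "quasimorphism_on G P f"
proof -
  obtain C where C: "\<forall>x \<in> P. \<bar>f x\<bar> \<le> C" using b unfolding bounded_on_def by blast
  have "\<bar>f x + f y - f (x \<otimes> y)\<bar> \<le> 3 * C" if "x \<in> P" "y \<in> P" for x y
  proof -
    have "x \<otimes> y \<in> P" using that subgroup.m_closed[OF sP] by blast
    then show ?thesis using C that by (smt (verit))
  qed
  then show ?thesis unfolding quasimorphism_on_def by blast
qed

lemma transfer_fun:
  assumes s: "\<sigma> \<in> iso G G" and PQ: "P \<subseteq> carrier G" and b: "bounded_on P f" and a: "alternating_on G P f"
  shows "bounded_on (\<sigma> ` P) (f \<circ> inv_into (carrier G) \<sigma>) \<and> alternating_on G (\<sigma> ` P) (f \<circ> inv_into (carrier G) \<sigma>)"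
proof -
  interpret h: group_hom G G \<sigma> using iso_hom_facts[OF s] by blast
  have inj: "inj_on \<sigma> (carrier G)" using iso_hom_facts[OF s] by auto
  have fs: "\<And>y. y \<in> carrier G \<Longrightarrow> inv_into (carrier G) \<sigma> (\<sigma> y) = y" using inj by (simp add: inv_into_f_f)
  obtain C where C: "\<forall>x \<in> P. \<bar>f x\<bar> \<le> C" using b unfolding bounded_on_def by blast
  have "bounded_on (\<sigma> ` P) (f \<circ> inv_into (carrier G) \<sigma>)"
    unfolding bounded_on_def using C fs PQ by (intro exI[of _ C]) auto
  moreover have "alternating_on G (\<sigma> ` P) (f \<circ> inv_into (carrier G) \<sigma>)"
    unfolding alternating_on_def
  proof
    fix y assume "y \<in> \<sigma> ` P"
    then obtain p where p: "p \<in> P" "y = \<sigma> p" by blast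
    have pc: "p \<in> carrier G" using p PQ by blast
    have "inv y = \<sigma> (inv p)" using p pc by simp
    then have 1: "inv_into (carrier G) \<sigma> (inv y) = inv p" using fs[of "inv p"] pc by (simp del: h.hom_inv)
    have 2: "inv_into (carrier G) \<sigma> y = p" using fs pc p by simp
    have 3: "f (inv p) = - f p" using a p unfolding alternating_on_def by blast
    show "(f \<circ> inv_into (carrier G) \<sigma>) (inv y) = - (f \<circ> inv_into (carrier G) \<sigma>) y"
      using 1 2 3 by simp
  qed
  ultimately show ?thesis by blast
qed

lemma sc_sub:
  assumes fp: "is_free_product G P Q" and s: "\<sigma> \<in> iso G G" and inn: "inner_aut G \<sigma>"
  shows "split_classes G P Q \<subseteq> split_classes G (\<sigma> ` P) (\<sigma> ` Q)"
proof
  fix w assume "w \<in> split_classes G P Q"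
  then obtain fP fQ where w: "w = omega G (split_qm G P Q fP fQ)" and
    h: "bounded_on P fP" "alternating_on G P fP" "bounded_on Q fQ" "alternating_on G Q fQ"
    unfolding split_classes_def by blast
  have sP: "subgroup P G" and sQ: "subgroup Q G" using fp unfolding is_free_product_def by auto
  have PQ: "P \<subseteq> carrier G" "Q \<subseteq> carrier G" using fp_sub[OF fp] by auto
  have "w = omega G (split_qm G (\<sigma> ` P) (\<sigma> ` Q) (fP \<circ> inv_into (carrier G) \<sigma>) (fQ \<circ> inv_into (carrier G) \<sigma>))"
    unfolding w by (rule omega_bdd, rule core[OF fp bdd_qm[OF sP h(1)] bdd_qm[OF sQ h(3)] h(2) h(4) s inn])
  moreover note transfer_fun[OF s PQ(1) h(1,2)] transfer_fun[OF s PQ(2) h(3,4)]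
  ultimately show "w \<in> split_classes G (\<sigma> ` P) (\<sigma> ` Q)" unfolding split_classes_def by blast
qed

lemma sc_eq:
  assumes fp: "is_free_product G P Q" and s: "\<sigma> \<in> iso G G" and inn: "inner_aut G \<sigma>"
  shows "split_classes G P Q = split_classes G (\<sigma> ` P) (\<sigma> ` Q)"
proof
  show "split_classes G P Q \<subseteq> split_classes G (\<sigma> ` P) (\<sigma> ` Q)" using sc_sub[OF fp s inn] .
  obtain x where x: "x \<in> carrier G" "\<forall>g \<in> carrier G. \<sigma> g = x \<otimes> g \<otimes> inv x"
    using inn unfolding inner_aut_def by blast
  define psi where "psi = inv_into (carrier G) \<sigma>"
  have ps: "psi \<in> iso G G" unfolding psi_def using iso_set_sym[OF s] .
  have pinn: "inner_aut G psi" unfolding inner_aut_def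
  proof (intro bexI[of _ "inv x"] ballI)
    fix g assume g: "g \<in> carrier G"
    show "psi g = inv x \<otimes> g \<otimes> inv (inv x)" using inner_inv[OF s x g] x(1) unfolding psi_def by simp
  qed (use x in simp)
  have inj: "inj_on \<sigma> (carrier G)" using iso_hom_facts[OF s] by auto
  have PQ: "P \<subseteq> carrier G" "Q \<subseteq> carrier G" using fp_sub[OF fp] by auto
  have bk: "psi ` \<sigma> ` P = P" "psi ` \<sigma> ` Q = Q" unfolding psi_def using inj PQ by auto
  show "split_classes G (\<sigma> ` P) (\<sigma> ` Q) \<subseteq> split_classes G P Q"
    using sc_sub[OF fp_iso[OF fp s] ps pinn] bk by simp
qed

lemma conj_iso:
  assumes y: "y \<in> carrier G"
  shows "(\<lambda>g. y \<otimes> g \<otimes> inv y) \<in> iso G G" "inner_aut G (\<lambda>g. y \<otimes> g \<otimes> inv y)"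
proof -
  have hom: "(\<lambda>g. y \<otimes> g \<otimes> inv y) \<in> hom G G"
  proof (rule homI)
    fix a b assume ab: "a \<in> carrier G" "b \<in> carrier G"
    show "y \<otimes> (a \<otimes> b) \<otimes> inv y = y \<otimes> a \<otimes> inv y \<otimes> (y \<otimes> b \<otimes> inv y)"
      using ab y by (simp add: m_assoc)
  qed (use y in simp)
  have inj: "inj_on (\<lambda>g. y \<otimes> g \<otimes> inv y) (carrier G)"
  proof (rule inj_onI)
    fix a b assume ab: "a \<in> carrier G" "b \<in> carrier G" "y \<otimes> a \<otimes> inv y = y \<otimes> b \<otimes> inv y"
    then show "a = b" using y by simp
  qed
  have surj: "(\<lambda>g. y \<otimes> g \<otimes> inv y) ` carrier G = carrier G"
  proof
    show "(\<lambda>g. y \<otimes> g \<otimes> inv y) ` carrier G \<subseteq> carrier G" using y by auto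
    show "carrier G \<subseteq> (\<lambda>g. y \<otimes> g \<otimes> inv y) ` carrier G"
    proof
      fix g assume g: "g \<in> carrier G"
      have "g = y \<otimes> (inv y \<otimes> g \<otimes> y) \<otimes> inv y" using g y by (simp add: m_assoc)
      moreover have "inv y \<otimes> g \<otimes> y \<in> carrier G" using g y by simp
      ultimately show "g \<in> (\<lambda>g. y \<otimes> g \<otimes> inv y) ` carrier G" by blast
    qed
  qed
  show "(\<lambda>g. y \<otimes> g \<otimes> inv y) \<in> iso G G" unfolding iso_def bij_betw_def using hom inj surj by blast
  show "inner_aut G (\<lambda>g. y \<otimes> g \<otimes> inv y)" unfolding inner_aut_def using y by blast
qed

end


context group begin
lemma outer_img:
  assumes t1: "\<tau>1 \<in> iso G G" and so: "same_outer_class G \<tau>1 \<tau>2"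
    and A: "A \<subseteq> carrier G"
  shows "\<exists>y \<in> carrier G. \<forall>A. A \<subseteq> carrier G \<longrightarrow> \<tau>2 ` A = (\<lambda>g. y \<otimes>\<^bsub>G\<^esub> g \<otimes>\<^bsub>G\<^esub> inv\<^bsub>G\<^esub> y) ` \<tau>1 ` A"
proof -
  interpret h: group_hom G G \<tau>1 using iso_hom_facts[OF t1] by blast
  obtain \<sigma> where s: "inner_aut G \<sigma>" "\<forall>g \<in> carrier G. \<tau>2 g = \<tau>1 (\<sigma> g)"
    using so unfolding same_outer_class_def by blast
  obtain x where x: "x \<in> carrier G" "\<forall>g \<in> carrier G. \<sigma> g = x \<otimes> g \<otimes> inv x"
    using s(1) unfolding inner_aut_def by blast
  have pt: "\<tau>2 a = \<tau>1 x \<otimes> \<tau>1 a \<otimes> inv (\<tau>1 x)" if a: "a \<in> carrier G" for a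
    using s(2) x a by simp
  have "\<tau>2 ` A = (\<lambda>g. \<tau>1 x \<otimes> g \<otimes> inv (\<tau>1 x)) ` \<tau>1 ` A" if "A \<subseteq> carrier G" for A
  proof -
    have "\<tau>2 ` A = (\<lambda>a. \<tau>1 x \<otimes> \<tau>1 a \<otimes> inv (\<tau>1 x)) ` A" using pt that by (auto intro!: image_cong)
    then show ?thesis by (simp add: image_image)
  qed
  moreover have "\<tau>1 x \<in> carrier G" using x by simp
  ultimately show ?thesis by blast
qed
end

theorem proposition3p15:
  fixes G :: "('a, 'b) monoid_scheme"
    and A B :: "'a set"
    and fA fB :: "'a \<Rightarrow> real"
    and \<sigma> :: "'a \<Rightarrow> 'a"
  assumes "group G"
    and "is_free_product G A B"
    and "A \<noteq> {\<one>\<^bsub>G\<^esub>}" and "B \<noteq> {\<one>\<^bsub>G\<^esub>}"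
    and "quasimorphism_on G A fA" and "alternating_on G A fA"
    and "quasimorphism_on G B fB" and "alternating_on G B fB"
    and "\<sigma> \<in> iso G G" and "inner_aut G \<sigma>"
  shows "(\<exists>C. \<forall>g \<in> carrier G.
            \<bar>split_qm G A B fA fB g - twisted_split G \<sigma> A B fA fB g\<bar> \<le> C)
       \<and> omega G (split_qm G A B fA fB) = omega G (twisted_split G \<sigma> A B fA fB)
       \<and> split_classes G A B = split_classes G (\<sigma> ` A) (\<sigma> ` B)
       \<and> (\<forall>\<tau>1 \<tau>2. \<tau>1 \<in> iso G G \<longrightarrow> \<tau>2 \<in> iso G G \<longrightarrow> same_outer_class G \<tau>1 \<tau>2 \<longrightarrow>
            split_classes G (\<tau>1 ` A) (\<tau>1 ` B) = split_classes G (\<tau>2 ` A) (\<tau>2 ` B))"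
proof -
  interpret group G by (rule assms(1))
  note fp = assms(2)
  have P1: "\<exists>C. \<forall>g \<in> carrier G.
            \<bar>split_qm G A B fA fB g - twisted_split G \<sigma> A B fA fB g\<bar> \<le> C"
    unfolding twisted_split_def using core[OF fp assms(5,7,6,8,9,10)] .
  have P2: "omega G (split_qm G A B fA fB) = omega G (twisted_split G \<sigma> A B fA fB)"
    using omega_bdd[OF P1] .
  have P3: "split_classes G A B = split_classes G (\<sigma> ` A) (\<sigma> ` B)"
    using sc_eq[OF fp assms(9,10)] .
  have P4: "split_classes G (\<tau>1 ` A) (\<tau>1 ` B) = split_classes G (\<tau>2 ` A) (\<tau>2 ` B)"
    if t: "\<tau>1 \<in> iso G G" "\<tau>2 \<in> iso G G" "same_outer_class G \<tau>1 \<tau>2" for \<tau>1 \<tau>2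
  proof -
    have AB: "A \<subseteq> carrier G" "B \<subseteq> carrier G" using fp_sub[OF fp] by auto
    obtain y where y: "y \<in> carrier G"
      "\<forall>A. A \<subseteq> carrier G \<longrightarrow> \<tau>2 ` A = (\<lambda>g. y \<otimes>\<^bsub>G\<^esub> g \<otimes>\<^bsub>G\<^esub> inv\<^bsub>G\<^esub> y) ` \<tau>1 ` A"
      using outer_img[OF t(1) t(3) AB(1)] by blast
    have "split_classes G (\<tau>1 ` A) (\<tau>1 ` B) =
      split_classes G ((\<lambda>g. y \<otimes>\<^bsub>G\<^esub> g \<otimes>\<^bsub>G\<^esub> inv\<^bsub>G\<^esub> y) ` \<tau>1 ` A) ((\<lambda>g. y \<otimes>\<^bsub>G\<^esub> g \<otimes>\<^bsub>G\<^esub> inv\<^bsub>G\<^esub> y) ` \<tau>1 ` B)"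
      using sc_eq[OF fp_iso[OF fp t(1)] conj_iso[OF y(1)]] .
    then show ?thesis using y(2) AB by simp
  qed
  show ?thesis using P1 P2 P3 P4 by blast
qed


end
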